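(* Let $G\in\mathbb{R}^{m\times n}$ with rows $G_1^T,\dots,G_m^T$, let $b\in\mathbb{R}^m$, and let $\mathcal{P}=\{x\in\mathbb{R}^n : Gx\le b\}$ be a polyhedron that has an interior point. Let $f_d:\mathbb{R}^n\to\mathbb{R}^n$ be continuously differentiable and consider the discrete system $x_{k+1}=f_d(x_k)$. Assume that for every $i\in\{1,\dots,m\}$ the function $x\mapsto b_i-G_i^Tf_d(x)$ is convex. Then $\mathcal{P}$ is an invariant set for this discrete system if and only if there exists a matrix $H\in\mathbb{R}^{m\times m}$ with all entries nonnegative such that $$HGx-Gf_d(x)\ge Hb-b\quad\text{for all } x\in\mathbb{R}^n,$$ where the inequality between vectors is componentwise.
   Context: A set $\mathcal{S}\subseteq\mathbb{R}^n$ is an invariant set for the discrete system $x_{k+1}=f_d(x_k)$ if $x_k\in\mathcal{S}$ implies $x_{k+1}\in\mathcal{S}$ for all $k\in\mathbb{N}$. *)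

theory Defs
  imports "HOL-Analysis.Analysis"
begin

definition invariant_set :: "'a set \<Rightarrow> ('a \<Rightarrow> 'a) \<Rightarrow> bool" where
  "invariant_set S f \<longleftrightarrow> (\<forall>x. x \<in> S \<longrightarrow> f x \<in> S)"

definition cont_diff :: "('a::real_normed_vector \<Rightarrow> 'b::real_normed_vector) \<Rightarrow> bool" where
  "cont_diff f \<longleftrightarrow> (\<exists>f'. (\<forall>x. (f has_derivative blinfun_apply (f' x)) (at x)) \<and> continuous_on UNIV f')"

definition polyhedron :: "real^'n^'m \<Rightarrow> real^'m \<Rightarrow> (real^'n) set" where
  "polyhedron G b = {x. \<forall>i. (G *v x) $ i \<le> b $ i}"

end

theory Submission
  imports Defs
begin

lemma mv_comp: "((A::real^'n^'m) *v x) $ i = A $ i \<bullet> x"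
  by (simp add: matrix_vector_mult_def inner_vec_def)

lemma inner_vec_sum: "(l::real^'m) \<bullet> u = (\<Sum>j\<in>UNIV. l $ j * u $ j)"
  by (simp add: inner_vec_def)

lemma lin_all: assumes "\<And>c::real. 0 \<le> A + c * k" shows "k = 0"
proof (rule ccontr)
  assume k: "k \<noteq> 0"
  have "-(\<bar>A\<bar>+1)/k * k = -(\<bar>A\<bar>+1)" using k by simp
  then show False using assms[of "-(\<bar>A\<bar>+1)/k"] by linarith
qed

lemma lin_pos: assumes "\<And>c::real. c \<ge> 0 \<Longrightarrow> 0 \<le> A + c * k" shows "k \<ge> 0"
proof (rule ccontr)
  assume "\<not> k \<ge> 0"
  then have k: "k < 0" by simp
  have "-(\<bar>A\<bar>+1)/k * k = -(\<bar>A\<bar>+1)" using k by simp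
  moreover have "-(\<bar>A\<bar>+1)/k \<ge> 0" using k by (simp add: divide_nonpos_neg)
  ultimately show False using assms[of "-(\<bar>A\<bar>+1)/k"] by linarith
qed

lemma lin_eps: assumes "\<And>e::real. e > 0 \<Longrightarrow> 0 \<le> A + k * e" "k \<ge> 0" shows "0 \<le> A"
proof (rule ccontr)
  assume "\<not> 0 \<le> A"
  then have A: "A < 0" by simp
  then have "k > 0" using assms(1)[of 1] by simp
  then show False using assms(1)[of "-A/(2*k)"] A by (simp add: field_simps)
qed

lemma dual:
  fixes G :: "real^'n^'m" and b :: "real^'m" and g :: "real^'n \<Rightarrow> real"
  assumes x0: "x0 \<in> interior (polyhedron G b)"
    and cvx: "convex_on UNIV g"
    and nonneg: "\<forall>x \<in> polyhedron G b. g x \<ge> 0"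
  shows "\<exists>h::real^'m. (\<forall>j. 0 \<le> h$j) \<and> (\<forall>x. h \<bullet> (b - G *v x) \<le> g x)"
proof -
  define I where "I = {j. G $ j \<noteq> 0}"
  obtain e where e: "e > 0" "ball x0 e \<subseteq> polyhedron G b"
    using x0 by (meson mem_interior)
  have x0P: "x0 \<in> polyhedron G b" using e by auto
  have slater: "(G *v x0) $ j < b $ j" if "j \<in> I" for j
  proof -
    let ?n = "norm (G $ j)"
    have n: "?n > 0" using that I_def by simp
    define y where "y = x0 + (e / (2 * ?n)) *\<^sub>R G $ j"
    have "dist x0 y = e / 2" using n e by (simp add: y_def dist_norm)
    then have "y \<in> polyhedron G b" using e by auto
    then have "(G *v y) $ j \<le> b $ j" by (simp add: polyhedron_def)
    moreover have "(G *v y) $ j = (G *v x0) $ j + e * ?n / 2"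
      using n by (simp add: y_def mv_comp inner_add_right power2_norm_eq_inner[symmetric] power2_eq_square)
    moreover have "e * ?n / 2 > 0" using e n by simp
    ultimately show ?thesis by linarith
  qed
  have degen: "0 \<le> b $ j" if "j \<notin> I" for j
  proof -
    have "(G *v x0) $ j \<le> b $ j" using x0P by (simp add: polyhedron_def)
    then show ?thesis using that I_def by (simp add: mv_comp)
  qed
  define S :: "((real^'m) \<times> real) set" where
    "S = {(u,t). \<exists>x. (\<forall>j\<in>I. (G *v x) $ j - b $ j \<le> u $ j) \<and> g x < t}"
  have "convex S"
    unfolding convex_alt
  proof (intro ballI allI impI)
    fix z1 z2 and a :: real
    assume z1: "z1 \<in> S" and z2: "z2 \<in> S" and a: "0 \<le> a \<and> a \<le> 1"
    obtain u1 t1 x1 where 1: "z1 = (u1,t1)" "\<forall>j\<in>I. (G *v x1) $ j - b $ j \<le> u1 $ j" "g x1 < t1"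
      using z1 S_def by auto
    obtain u2 t2 x2 where 2: "z2 = (u2,t2)" "\<forall>j\<in>I. (G *v x2) $ j - b $ j \<le> u2 $ j" "g x2 < t2"
      using z2 S_def by auto
    let ?x = "(1 - a) *\<^sub>R x1 + a *\<^sub>R x2"
    have "g ?x \<le> (1 - a) * g x1 + a * g x2"
      using convex_onD[OF cvx, of a x1 x2] a by simp
    also have "\<dots> < (1 - a) * t1 + a * t2"
    proof (cases "a = 0")
      case True then show ?thesis using 1 by simp
    next
      case False then have "a > 0" using a by simp
      have "(1-a)*g x1 \<le> (1-a)*t1" using a 1 by (intro mult_left_mono) auto
      moreover have "a*g x2 < a*t2" using \<open>a > 0\<close> 2 by (intro mult_strict_left_mono) auto
      ultimately show ?thesis by linarith
    qed
    finally have gx: "g ?x < (1 - a) * t1 + a * t2" .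
    have "\<forall>j\<in>I. (G *v ?x) $ j - b $ j \<le> ((1 - a) *\<^sub>R u1 + a *\<^sub>R u2) $ j"
    proof
      fix j assume j: "j \<in> I"
      have "(G *v ?x) $ j - b $ j = (1-a) * ((G *v x1) $ j - b $ j) + a * ((G *v x2) $ j - b $ j)"
        by (simp add: matrix_vector_right_distrib matrix_vector_mult_scaleR algebra_simps)
      also have "\<dots> \<le> (1-a) * u1 $ j + a * u2 $ j"
        using 1(2) 2(2) j a by (intro add_mono mult_left_mono) auto
      finally show "(G *v ?x) $ j - b $ j \<le> ((1 - a) *\<^sub>R u1 + a *\<^sub>R u2) $ j" by simp
    qed
    then show "(1 - a) *\<^sub>R z1 + a *\<^sub>R z2 \<in> S"
      using gx 1 2 by (auto simp: S_def)
  qed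
  moreover have "0 \<notin> S"
  proof
    assume "0 \<in> S"
    then obtain x where x: "\<forall>j\<in>I. (G *v x) $ j - b $ j \<le> 0" "g x < 0"
      by (auto simp: S_def zero_prod_def)
    have "x \<in> polyhedron G b"
      unfolding polyhedron_def
    proof (safe)
      fix j show "(G *v x) $ j \<le> b $ j"
        using x(1) degen[of j] by (cases "j \<in> I") (auto simp: I_def mv_comp)
    qed
    then have "g x \<ge> 0" using nonneg by blast
    then show False using x(2) by linarith
  qed
  ultimately obtain a where a: "a \<noteq> 0" "\<forall>z\<in>S. 0 \<le> a \<bullet> z"
    using separating_hyperplane_set_0 by blast
  define l where "l = fst a"
  define \<mu> where "\<mu> = snd a"
  have key: "0 \<le> l \<bullet> u + \<mu> * t" if "\<forall>j\<in>I. (G *v x) $ j - b $ j \<le> u $ j" "g x < t" for x u t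
    using a(2)[rule_format, of "(u,t)"] that by (auto simp: S_def l_def \<mu>_def inner_prod_def)
  define u0 where "u0 = G *v x0 - b"
  have u0: "\<forall>j\<in>I. (G *v x0) $ j - b $ j \<le> u0 $ j" by (simp add: u0_def)
  have off: "l $ j = 0" if "j \<notin> I" for j
  proof (rule lin_all[of "l \<bullet> u0 + \<mu> * (g x0 + 1)"])
    fix c :: real
    have "0 \<le> l \<bullet> (u0 + c *\<^sub>R axis j 1) + \<mu> * (g x0 + 1)"
      by (rule key[of x0]) (use u0 that in \<open>auto simp: axis_def u0_def\<close>)
    then show "0 \<le> l \<bullet> u0 + \<mu> * (g x0 + 1) + c * l $ j"
      by (simp add: inner_add_right inner_axis algebra_simps)
  qed
  have lpos: "l $ j \<ge> 0" for j
  proof (cases "j \<in> I")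
    case False then show ?thesis using off by simp
  next
    case True
    show ?thesis
    proof (rule lin_pos[of "l \<bullet> u0 + \<mu> * (g x0 + 1)"])
      fix c :: real assume c: "c \<ge> 0"
      have "0 \<le> l \<bullet> (u0 + c *\<^sub>R axis j 1) + \<mu> * (g x0 + 1)"
        by (rule key[of x0]) (use u0 c in \<open>auto simp: axis_def u0_def\<close>)
      then show "0 \<le> l \<bullet> u0 + \<mu> * (g x0 + 1) + c * l $ j"
        by (simp add: inner_add_right inner_axis algebra_simps)
    qed
  qed
  have mupos: "\<mu> \<ge> 0"
  proof (rule lin_pos[of "l \<bullet> u0 + \<mu> * (g x0 + 1)"])
    fix c :: real assume c: "c \<ge> 0"
    have "0 \<le> l \<bullet> u0 + \<mu> * (g x0 + 1 + c)"
      by (rule key[of x0]) (use u0 c in \<open>auto simp: axis_def u0_def\<close>)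
    then show "0 \<le> l \<bullet> u0 + \<mu> * (g x0 + 1) + c * \<mu>"
      by (simp add: algebra_simps)
  qed
  have weak: "0 \<le> l \<bullet> (G *v x - b) + \<mu> * g x" for x
  proof (rule lin_eps[OF _ mupos])
    fix e :: real assume "e > 0"
    then have "0 \<le> l \<bullet> (G *v x - b) + \<mu> * (g x + e)"
      by (intro key[of x]) auto
    then show "0 \<le> l \<bullet> (G *v x - b) + \<mu> * g x + \<mu> * e" by (simp add: algebra_simps)
  qed
  have mu0: "\<mu> > 0"
  proof (rule ccontr)
    assume "\<not> \<mu> > 0"
    then have m: "\<mu> = 0" using mupos by simp
    then have "l \<noteq> 0" using a(1) l_def \<mu>_def by (auto simp: zero_prod_def prod_eq_iff)
    then obtain j where j: "l $ j \<noteq> 0" by (auto simp: vec_eq_iff)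
    then have jI: "j \<in> I" using off by blast
    have le: "\<forall>k\<in>UNIV. l $ k * (G *v x0 - b) $ k \<le> 0"
        using lpos x0P by (auto simp: polyhedron_def mult_nonneg_nonpos)
    have lt: "\<exists>k\<in>UNIV. l $ k * (G *v x0 - b) $ k < 0"
        using slater[OF jI] lpos[of j] j by (intro bexI[of _ j]) (auto simp: mult_pos_neg)
    have "(\<Sum>k\<in>UNIV. l $ k * (G *v x0 - b) $ k) < (\<Sum>k\<in>UNIV. (0::real))"
      using sum_strict_mono_ex1[OF finite le lt] by simp
    then show False using weak[of x0] m by (simp add: inner_vec_sum)
  qed
  define h where "h = (1 / \<mu>) *\<^sub>R l"
  have "\<forall>j. 0 \<le> h $ j" using lpos mu0 by (simp add: h_def)
  moreover have "\<forall>x. h \<bullet> (b - G *v x) \<le> g x"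
  proof
    fix x
    have "h \<bullet> (b - G *v x) = - (l \<bullet> (G *v x - b)) / \<mu>"
      by (simp add: h_def inner_diff_right diff_divide_distrib)
    also have "\<dots> \<le> g x" using weak[of x] mu0 by (simp add: field_simps)
    finally show "h \<bullet> (b - G *v x) \<le> g x" .
  qed
  ultimately show ?thesis by blast
qed

theorem theorem4:
  fixes G :: "real^'n^'m" and b :: "real^'m" and f :: "real^'n \<Rightarrow> real^'n"
  assumes "interior (polyhedron G b) \<noteq> {}"
    and "cont_diff f"
    and "\<forall>i. convex_on UNIV (\<lambda>x. b $ i - (G $ i) \<bullet> f x)"
  shows "invariant_set (polyhedron G b) f \<longleftrightarrow>
    (\<exists>H :: real^'m^'m. (\<forall>i j. 0 \<le> H $ i $ j) \<and>
       (\<forall>x i. (H *v (G *v x) - G *v f x) $ i \<ge> (H *v b - b) $ i))"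
proof
  assume inv: "invariant_set (polyhedron G b) f"
  obtain x0 where x0: "x0 \<in> interior (polyhedron G b)" using assms(1) by blast
  have "\<forall>i. \<exists>h::real^'m. (\<forall>j. 0 \<le> h$j) \<and> (\<forall>x. h \<bullet> (b - G *v x) \<le> b $ i - (G $ i) \<bullet> f x)"
  proof
    fix i
    show "\<exists>h::real^'m. (\<forall>j. 0 \<le> h$j) \<and> (\<forall>x. h \<bullet> (b - G *v x) \<le> b $ i - (G $ i) \<bullet> f x)"
    proof (rule dual[OF x0 assms(3)[rule_format, of i]])
      show "\<forall>x\<in>polyhedron G b. 0 \<le> b $ i - G $ i \<bullet> f x"
        using inv by (auto simp: invariant_set_def polyhedron_def mv_comp)
    qed
  qed
  then have "\<exists>hh. \<forall>i. (\<forall>j. 0 \<le> hh i $ j) \<and> (\<forall>x. hh i \<bullet> (b - G *v x) \<le> b $ i - (G $ i) \<bullet> f x)"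
    by (rule choice)
  then obtain hh where hh: "\<And>i. (\<forall>j. 0 \<le> hh i $ j) \<and> (\<forall>x. hh i \<bullet> (b - G *v x) \<le> b $ i - (G $ i) \<bullet> f x)"
    by blast
  define H :: "real^'m^'m" where "H = (\<chi> i. hh i)"
  show "\<exists>H :: real^'m^'m. (\<forall>i j. 0 \<le> H $ i $ j) \<and>
       (\<forall>x i. (H *v (G *v x) - G *v f x) $ i \<ge> (H *v b - b) $ i)"
  proof (intro exI[of _ H] conjI allI)
    fix i j show "0 \<le> H $ i $ j" using hh by (simp add: H_def)
  next
    fix x i
    have "hh i \<bullet> (b - G *v x) \<le> b $ i - (G $ i) \<bullet> f x" using hh by blast
    then show "(H *v (G *v x) - G *v f x) $ i \<ge> (H *v b - b) $ i"
      by (simp add: H_def mv_comp inner_diff_right)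
  qed
next
  assume "\<exists>H :: real^'m^'m. (\<forall>i j. 0 \<le> H $ i $ j) \<and>
       (\<forall>x i. (H *v (G *v x) - G *v f x) $ i \<ge> (H *v b - b) $ i)"
  then obtain H :: "real^'m^'m" where H: "\<forall>i j. 0 \<le> H $ i $ j"
    "\<forall>x i. (H *v (G *v x) - G *v f x) $ i \<ge> (H *v b - b) $ i" by blast
  show "invariant_set (polyhedron G b) f"
    unfolding invariant_set_def
  proof (intro allI impI)
    fix x assume x: "x \<in> polyhedron G b"
    show "f x \<in> polyhedron G b"
      unfolding polyhedron_def
    proof (safe)
      fix i
      have "H $ i \<bullet> (G *v x - b) \<le> 0"
        unfolding inner_vec_sum
        using H(1) x by (intro sum_nonpos) (auto simp: polyhedron_def mult_nonneg_nonpos)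
      moreover have "(H *v (G *v x) - G *v f x) $ i \<ge> (H *v b - b) $ i" using H(2) by blast
      ultimately show "(G *v f x) $ i \<le> b $ i"
        by (simp add: mv_comp inner_diff_right)
    qed
  qed
qed

end
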